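(* Let $X_1$, $X_2$ be subcomplexes of a simplicial complex $X$ such that $X = X_1 \cup X_2$ and $\dim(X_1\cap X_2) = \dim(X)$. If $X_1$ and $X_2$ are both $q$-rigid, then $X$ is $q$-rigid. If, moreover (with $X_1$, $X_2$ both $q$-rigid), $X$ is minimally $q$-rigid, then both $X_1$ and $X_2$ are minimally $q$-rigid.
   Context: A simplicial complex is a finite set of finite sets closed under taking subsets; an element of size $i+1$ is an $i$-face; 1-faces are edges; $V(X)$ is the vertex set; the dimension is the maximal face dimension. $X$ is connected if its edge graph is connected. For a positive integer $q$, a $d$-dimensional simplicial complex $X$ is $q$-rigid if $X$ is connected and for every $A\subseteq V(X)$ disjoint from at least one $d$-face of $X$, the number of edges of $X$ meeting $A$ is at least $q\cdot\#(A)$. An $n$-vertex $d$-dimensional complex is minimally $q$-rigid if it is $q$-rigid and has exactly $(n-d-1)q+\binom{d+1}{2}$ edges. *)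

theory Defs
  imports Main
begin

definition simplicial_complex :: "'a set set \<Rightarrow> bool" where
  "simplicial_complex X \<longleftrightarrow> finite X \<and> (\<forall>F\<in>X. finite F) \<and> (\<forall>F\<in>X. \<forall>G. G \<subseteq> F \<longrightarrow> G \<in> X)"

definition vertices :: "'a set set \<Rightarrow> 'a set" where
  "vertices X = \<Union>X"

text \<open>Dimension = maximal face dimension (face of size i+1 has dimension i).
  Integer valued; the empty complex and the complex with only the empty face get -1.\<close>
definition cdim :: "'a set set \<Rightarrow> int" where
  "cdim X = (if X = {} then -1 else Max ((\<lambda>F. int (card F) - 1) ` X))"

definition faces_of_dim :: "'a set set \<Rightarrow> int \<Rightarrow> 'a set set" where
  "faces_of_dim X i = {F \<in> X. int (card F) = i + 1}"

definition edges :: "'a set set \<Rightarrow> 'a set set" where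
  "edges X = {F \<in> X. card F = 2}"

definition edge_rel :: "'a set set \<Rightarrow> ('a \<times> 'a) set" where
  "edge_rel X = {(u, v). {u, v} \<in> edges X}"

definition complex_connected :: "'a set set \<Rightarrow> bool" where
  "complex_connected X \<longleftrightarrow> (\<forall>u\<in>vertices X. \<forall>v\<in>vertices X. (u, v) \<in> (edge_rel X)\<^sup>*)"

definition edges_meeting :: "'a set set \<Rightarrow> 'a set \<Rightarrow> 'a set set" where
  "edges_meeting X A = {e \<in> edges X. e \<inter> A \<noteq> {}}"

definition q_rigid :: "nat \<Rightarrow> 'a set set \<Rightarrow> bool" where
  "q_rigid q X \<longleftrightarrow> complex_connected X \<and>
     (\<forall>A. A \<subseteq> vertices X \<and> (\<exists>F\<in>faces_of_dim X (cdim X). A \<inter> F = {})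
          \<longrightarrow> card (edges_meeting X A) \<ge> q * card A)"

definition minimally_q_rigid :: "nat \<Rightarrow> 'a set set \<Rightarrow> bool" where
  "minimally_q_rigid q X \<longleftrightarrow> q_rigid q X \<and>
     int (card (edges X)) =
       (int (card (vertices X)) - cdim X - 1) * int q + int ((nat (cdim X + 1)) choose 2)"

end

theory Submission
  imports Defs
begin

lemma sc_sub: "simplicial_complex X \<Longrightarrow> F \<in> X \<Longrightarrow> G \<subseteq> F \<Longrightarrow> G \<in> X"
  unfolding simplicial_complex_def by blast

lemma sc_fin: "simplicial_complex X \<Longrightarrow> finite X"
  unfolding simplicial_complex_def by blast

lemma sc_finV: "simplicial_complex X \<Longrightarrow> finite (vertices X)"
  unfolding simplicial_complex_def vertices_def by blast

lemma sc_finE: "simplicial_complex X \<Longrightarrow> finite (edges X)"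
  unfolding simplicial_complex_def edges_def by auto

lemma face_sub_V: "F \<in> X \<Longrightarrow> F \<subseteq> vertices X"
  unfolding vertices_def by blast

lemma edge_sub_V: "e \<in> edges X \<Longrightarrow> e \<subseteq> vertices X"
  unfolding vertices_def edges_def by blast

lemma cdim_ge: "finite X \<Longrightarrow> F \<in> X \<Longrightarrow> int (card F) - 1 \<le> cdim X"
  unfolding cdim_def by auto

lemma cdim_ge_m1: assumes "finite X" shows "cdim X \<ge> -1"
proof (cases "X = {}")
  case True then show ?thesis by (simp add: cdim_def)
next
  case False
  then obtain F where "F \<in> X" by blast
  show ?thesis
  proof (cases "finite X")
    case True
    then show ?thesis using cdim_ge[OF True \<open>F \<in> X\<close>] by linarith
  next
    case False
    then show ?thesis using assms by simp
  qed
qed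

lemma cdim_attained: "finite X \<Longrightarrow> X \<noteq> {} \<Longrightarrow> \<exists>F\<in>X. int (card F) - 1 = cdim X"
proof -
  assume "finite X" "X \<noteq> {}"
  then have "Max ((\<lambda>F. int (card F) - 1) ` X) \<in> (\<lambda>F. int (card F) - 1) ` X"
    by (intro Max_in) auto
  then show ?thesis using \<open>X \<noteq> {}\<close> unfolding cdim_def by auto
qed

lemma cdim_mono: assumes "finite X" "Y \<subseteq> X" shows "cdim Y \<le> cdim X"
proof (cases "Y = {}")
  case True then show ?thesis using cdim_ge_m1[OF assms(1)] by (simp add: cdim_def)
next
  case False
  have "finite Y" using assms by (rule finite_subset[rotated])
  then obtain F where "F \<in> Y" "int (card F) - 1 = cdim Y" using cdim_attained False by blast
  then show ?thesis using cdim_ge[OF assms(1), of F] assms(2) by auto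
qed

lemma V_nonempty_cdim: "simplicial_complex X \<Longrightarrow> vertices X \<noteq> {} \<Longrightarrow> cdim X \<ge> 0"
proof -
  assume sc: "simplicial_complex X" and "vertices X \<noteq> {}"
  then obtain v F where "v \<in> F" "F \<in> X" unfolding vertices_def by blast
  then have "{v} \<in> X" using sc_sub[OF sc] by blast
  then show ?thesis using cdim_ge[OF sc_fin[OF sc], of "{v}"] by simp
qed

lemma vertices_Un: "vertices (X1 \<union> X2) = vertices X1 \<union> vertices X2"
  unfolding vertices_def by blast

lemma edges_mono: "X1 \<subseteq> X \<Longrightarrow> edges X1 \<subseteq> edges X"
  unfolding edges_def by blast

lemma rigidD:
  assumes "q_rigid q X" "A \<subseteq> vertices X" "F \<in> faces_of_dim X (cdim X)" "A \<inter> F = {}"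
  shows "q * card A \<le> card (edges_meeting X A)"
proof -
  have "\<forall>A. A \<subseteq> vertices X \<and> (\<exists>F\<in>faces_of_dim X (cdim X). A \<inter> F = {})
          \<longrightarrow> card (edges_meeting X A) \<ge> q * card A"
    using assms(1) unfolding q_rigid_def by (rule conjunct2)
  then show ?thesis using assms(2-4) by blast
qed

lemma lower_bound:
  assumes sc: "simplicial_complex X" and r: "q_rigid q X"
    and F: "F \<in> X" "int (card F) = cdim X + 1"
  shows "int (card (edges X)) \<ge> (int (card (vertices X)) - cdim X - 1) * int q
           + int (nat (cdim X + 1) choose 2)"
proof -
  define A where "A = vertices X - F"
  have FV: "F \<subseteq> vertices X" using F face_sub_V by blast
  have finV: "finite (vertices X)" using sc_finV[OF sc] .
  have finF: "finite F" using finite_subset[OF FV finV] .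
  have cA: "card A = card (vertices X) - card F" unfolding A_def
    using card_Diff_subset[OF finF FV] .
  have cFle: "card F \<le> card (vertices X)" using card_mono[OF finV FV] .
  have "F \<in> faces_of_dim X (cdim X)" using F unfolding faces_of_dim_def by auto
  moreover have "A \<subseteq> vertices X" "A \<inter> F = {}" unfolding A_def by auto
  ultimately have h1: "card (edges_meeting X A) \<ge> q * card A" using rigidD[OF r] by blast
  define P where "P = {B. B \<subseteq> F \<and> card B = 2}"
  have cP: "card P = card F choose 2" unfolding P_def using n_subsets[OF finF] by simp
  have PE: "P \<subseteq> edges X" unfolding P_def edges_def using sc_sub[OF sc F(1)] by blast
  have ME: "edges_meeting X A \<subseteq> edges X" unfolding edges_meeting_def by blast
  have disj: "P \<inter> edges_meeting X A = {}"
  proof -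
    { fix e assume "e \<in> P" "e \<in> edges_meeting X A"
      then have "e \<subseteq> F" "e \<inter> A \<noteq> {}" unfolding P_def edges_meeting_def by auto
      then have False unfolding A_def by blast }
    then show ?thesis by blast
  qed
  have finE: "finite (edges X)" using sc_finE[OF sc] .
  have "card (P \<union> edges_meeting X A) = card P + card (edges_meeting X A)"
    using card_Un_disjoint[OF finite_subset[OF PE finE] finite_subset[OF ME finE] disj] .
  moreover have "card (P \<union> edges_meeting X A) \<le> card (edges X)"
    using PE ME by (intro card_mono[OF finE]) simp
  ultimately have h2: "card P + q * card A \<le> card (edges X)" using h1 by linarith
  have nF: "nat (cdim X + 1) = card F" using F(2) by simp
  have "int (card A) = int (card (vertices X)) - int (card F)" using cA cFle by simp
  then have iA: "int (card A) = int (card (vertices X)) - cdim X - 1" using F(2) by linarith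
  have eqq: "int (q * card A) = (int (card (vertices X)) - cdim X - 1) * int q"
    unfolding of_nat_mult iA by (rule mult.commute)
  have i2: "int (card P) + int (q * card A) \<le> int (card (edges X))" using h2 by linarith
  have cc: "int (nat (cdim X + 1) choose 2) = int (card P)" using cP nF by simp
  show ?thesis using eqq i2 cc by linarith
qed

lemma key:
  assumes sc1: "simplicial_complex X1" and sc2: "simplicial_complex X2"
    and XU: "X = X1 \<union> X2" and sc: "simplicial_complex X"
    and d1: "cdim X1 = d" and d2: "cdim X2 = d"
    and G: "G \<in> X1" "G \<in> X2" "int (card G) = d + 1"
    and r1: "q_rigid q X1" and r2: "q_rigid q X2"
    and AV: "A \<subseteq> vertices X" and F: "F \<in> X1" "int (card F) = d + 1" and AF: "A \<inter> F = {}"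
  shows "card (edges_meeting X A) \<ge> q * card A"
proof -
  define A1 where "A1 = A \<inter> vertices X1"
  define A2 where "A2 = A - vertices X1"
  have "F \<in> faces_of_dim X1 (cdim X1)" using F d1 unfolding faces_of_dim_def by auto
  moreover have "A1 \<subseteq> vertices X1" "A1 \<inter> F = {}" using AF unfolding A1_def by auto
  ultimately have h1: "card (edges_meeting X1 A1) \<ge> q * card A1" using rigidD[OF r1] by blast
  have "G \<in> faces_of_dim X2 (cdim X2)" using G d2 unfolding faces_of_dim_def by auto
  moreover have "A2 \<subseteq> vertices X2"
  proof -
    have "vertices X = vertices X1 \<union> vertices X2" using XU vertices_Un by simp
    then show ?thesis using AV unfolding A2_def by auto
  qed
  moreover have "A2 \<inter> G = {}" using face_sub_V[OF G(1)] unfolding A2_def by blast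
  ultimately have h2: "card (edges_meeting X2 A2) \<ge> q * card A2" using rigidD[OF r2] by blast
  have E1: "edges X1 \<subseteq> edges X" and E2: "edges X2 \<subseteq> edges X"
    using XU by (auto intro: edges_mono[THEN subsetD])
  have disj: "edges_meeting X1 A1 \<inter> edges_meeting X2 A2 = {}"
  proof -
    { fix e assume "e \<in> edges_meeting X1 A1" "e \<in> edges_meeting X2 A2"
      then have "e \<in> edges X1" "e \<inter> A2 \<noteq> {}" unfolding edges_meeting_def by auto
      then have "e \<subseteq> vertices X1" "e \<inter> A2 \<noteq> {}" using edge_sub_V by auto
      then have False unfolding A2_def by blast }
    then show ?thesis by blast
  qed
  have s1: "edges_meeting X1 A1 \<subseteq> edges_meeting X A"
    unfolding edges_meeting_def A1_def using E1 by auto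
  have s2: "edges_meeting X2 A2 \<subseteq> edges_meeting X A"
    unfolding edges_meeting_def A2_def using E2 by auto
  have finM: "finite (edges_meeting X A)"
    using sc_finE[OF sc] unfolding edges_meeting_def by auto
  have "card (edges_meeting X1 A1 \<union> edges_meeting X2 A2)
        = card (edges_meeting X1 A1) + card (edges_meeting X2 A2)"
    using card_Un_disjoint[OF finite_subset[OF s1 finM] finite_subset[OF s2 finM] disj] .
  moreover have "card (edges_meeting X1 A1 \<union> edges_meeting X2 A2) \<le> card (edges_meeting X A)"
    using s1 s2 by (intro card_mono[OF finM]) simp
  moreover have "card A = card A1 + card A2"
  proof -
    have "finite A" using finite_subset[OF AV sc_finV[OF sc]] .
    moreover have "A = A1 \<union> A2" "A1 \<inter> A2 = {}" unfolding A1_def A2_def by auto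
    ultimately show ?thesis using card_Un_disjoint[of A1 A2] by simp
  qed
  ultimately have "card (edges_meeting X1 A1) + card (edges_meeting X2 A2) \<le> card (edges_meeting X A)"
    "q * card A = q * card A1 + q * card A2" by (simp_all add: algebra_simps)
  then show ?thesis using h1 h2 by linarith
qed

lemma part2:
  assumes sc1: "simplicial_complex X1" and sc2: "simplicial_complex X2"
    and XU: "X = X1 \<union> X2" and sc: "simplicial_complex X"
    and d1: "cdim X1 = d" and d2: "cdim X2 = d" and d: "cdim X = d"
    and G: "G \<in> X1" "G \<in> X2" "int (card G) = d + 1"
    and r1: "q_rigid q X1" and r2: "q_rigid q X2"
    and m: "minimally_q_rigid q X"
  shows "minimally_q_rigid q X1"
proof -
  have lb: "int (card (edges X1)) \<ge> (int (card (vertices X1)) - d - 1) * int q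
           + int (nat (d + 1) choose 2)"
    using lower_bound[OF sc1 r1 G(1)] G(3) d1 by simp
  define A where "A = vertices X - vertices X1"
  have VU: "vertices X = vertices X1 \<union> vertices X2" using XU vertices_Un by simp
  have V1V: "vertices X1 \<subseteq> vertices X" using VU by blast
  have finV: "finite (vertices X)" using sc_finV[OF sc] .
  have cA: "card A = card (vertices X) - card (vertices X1)"
    unfolding A_def using card_Diff_subset[OF finite_subset[OF V1V finV] V1V] .
  have cle: "card (vertices X1) \<le> card (vertices X)" using card_mono[OF finV V1V] .
  have "G \<in> faces_of_dim X2 (cdim X2)" using G d2 unfolding faces_of_dim_def by auto
  moreover have "A \<subseteq> vertices X2" using VU unfolding A_def by blast
  moreover have "A \<inter> G = {}" using face_sub_V[OF G(1)] unfolding A_def by blast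
  ultimately have h2: "card (edges_meeting X2 A) \<ge> q * card A" using rigidD[OF r2] by blast
  have disj: "edges X1 \<inter> edges_meeting X2 A = {}"
  proof -
    { fix e assume "e \<in> edges X1" "e \<in> edges_meeting X2 A"
      then have "e \<subseteq> vertices X1" "e \<inter> A \<noteq> {}" using edge_sub_V unfolding edges_meeting_def by auto
      then have False unfolding A_def by blast }
    then show ?thesis by blast
  qed
  have s1: "edges X1 \<subseteq> edges X" using XU by (auto intro: edges_mono[THEN subsetD])
  have E2: "edges X2 \<subseteq> edges X" using XU by (auto intro: edges_mono[THEN subsetD])
  have s2: "edges_meeting X2 A \<subseteq> edges X"
    unfolding edges_meeting_def using E2 by blast
  have finE: "finite (edges X)" using sc_finE[OF sc] .
  have "card (edges X1 \<union> edges_meeting X2 A) = card (edges X1) + card (edges_meeting X2 A)"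
    using card_Un_disjoint[OF finite_subset[OF s1 finE] finite_subset[OF s2 finE] disj] .
  moreover have "card (edges X1 \<union> edges_meeting X2 A) \<le> card (edges X)"
    using s1 s2 by (intro card_mono[OF finE]) simp
  ultimately have h3: "card (edges X1) + q * card A \<le> card (edges X)" using h2 by linarith
  have eqA: "int (q * card A) = (int (card (vertices X)) - int (card (vertices X1))) * int q"
    using cA cle by (simp add: algebra_simps of_nat_diff)
  have mE: "int (card (edges X)) = (int (card (vertices X)) - d - 1) * int q + int (nat (d + 1) choose 2)"
    using m d unfolding minimally_q_rigid_def by simp
  have "int (card (edges X1)) + int (q * card A) \<le> int (card (edges X))" using h3 by linarith
  then have "int (card (edges X1)) \<le> (int (card (vertices X1)) - d - 1) * int q + int (nat (d + 1) choose 2)"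
    using eqA mE by (simp add: algebra_simps)
  then show ?thesis using lb r1 d1 unfolding minimally_q_rigid_def by simp
qed

theorem lemma6p5:
  fixes X X1 X2 :: "'a set set" and q :: nat
  assumes "q > 0"
    and "simplicial_complex X" and "simplicial_complex X1" and "simplicial_complex X2"
    and "X1 \<subseteq> X" and "X2 \<subseteq> X" and "X = X1 \<union> X2"
    and "cdim (X1 \<inter> X2) = cdim X"
    and "q_rigid q X1" and "q_rigid q X2"
  shows "q_rigid q X \<and>
         (minimally_q_rigid q X \<longrightarrow> minimally_q_rigid q X1 \<and> minimally_q_rigid q X2)"
proof -
  note sc = assms(2) and sc1 = assms(3) and sc2 = assms(4) and XU = assms(7)
    and r1 = assms(9) and r2 = assms(10)
  define d where "d = cdim X"
  have VU: "vertices X = vertices X1 \<union> vertices X2" using XU vertices_Un by simp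
  have finX: "finite X" using sc_fin[OF sc] .
  have d1: "cdim X1 = d"
    using cdim_mono[OF finX assms(5)] cdim_mono[OF sc_fin[OF sc1], of "X1 \<inter> X2"] assms(8)
    unfolding d_def by auto
  have d2: "cdim X2 = d"
    using cdim_mono[OF finX assms(6)] cdim_mono[OF sc_fin[OF sc2], of "X1 \<inter> X2"] assms(8)
    unfolding d_def by auto
  have Gex: "d \<ge> 0 \<Longrightarrow> \<exists>G. G \<in> X1 \<and> G \<in> X2 \<and> int (card G) = d + 1"
  proof -
    assume "d \<ge> 0"
    then have "X1 \<inter> X2 \<noteq> {}" using assms(8) unfolding d_def cdim_def by auto
    moreover have "finite (X1 \<inter> X2)" using finX assms(5) by (auto intro: finite_subset)
    ultimately obtain G where "G \<in> X1 \<inter> X2" "int (card G) - 1 = cdim (X1 \<inter> X2)"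
      using cdim_attained[of "X1 \<inter> X2"] by blast
    then have "G \<in> X1 \<inter> X2" "int (card G) - 1 = d" using assms(8) unfolding d_def by auto
    then show ?thesis by auto
  qed
  have conn: "complex_connected X"
    unfolding complex_connected_def
  proof (intro ballI)
    fix u v assume u: "u \<in> vertices X" and v: "v \<in> vertices X"
    then have "d \<ge> 0" using V_nonempty_cdim[OF sc] unfolding d_def by blast
    then obtain G where G: "G \<in> X1" "G \<in> X2" "int (card G) = d + 1" using Gex by blast
    then have "G \<noteq> {}" using \<open>d \<ge> 0\<close> by auto
    then obtain w where w: "w \<in> G" by blast
    have w1: "w \<in> vertices X1" and w2: "w \<in> vertices X2" using w G face_sub_V by blast+
    have m1: "(edge_rel X1)\<^sup>* \<subseteq> (edge_rel X)\<^sup>*"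
      by (rule rtrancl_mono) (use assms(5) in \<open>auto simp: edge_rel_def edges_def\<close>)
    have m2: "(edge_rel X2)\<^sup>* \<subseteq> (edge_rel X)\<^sup>*"
      by (rule rtrancl_mono) (use assms(6) in \<open>auto simp: edge_rel_def edges_def\<close>)
    have c1: "\<forall>a\<in>vertices X1. \<forall>b\<in>vertices X1. (a, b) \<in> (edge_rel X)\<^sup>*"
      using r1 m1 unfolding q_rigid_def complex_connected_def by blast
    have c2: "\<forall>a\<in>vertices X2. \<forall>b\<in>vertices X2. (a, b) \<in> (edge_rel X)\<^sup>*"
      using r2 m2 unfolding q_rigid_def complex_connected_def by blast
    have u': "u \<in> vertices X1 \<union> vertices X2" using u VU by simp
    have v': "v \<in> vertices X1 \<union> vertices X2" using v VU by simp
    have "(u, w) \<in> (edge_rel X)\<^sup>*" using u' c1 c2 w1 w2 by blast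
    moreover have "(w, v) \<in> (edge_rel X)\<^sup>*" using v' c1 c2 w1 w2 by blast
    ultimately show "(u, v) \<in> (edge_rel X)\<^sup>*" by (rule rtrancl_trans)
  qed
  have rig: "q_rigid q X"
    unfolding q_rigid_def
  proof (intro conjI conn allI impI)
    fix A assume "A \<subseteq> vertices X \<and> (\<exists>F\<in>faces_of_dim X (cdim X). A \<inter> F = {})"
    then have AV: "A \<subseteq> vertices X" and "\<exists>F\<in>faces_of_dim X (cdim X). A \<inter> F = {}" by auto
    then obtain F where F: "F \<in> X" "int (card F) = d + 1" "A \<inter> F = {}"
      unfolding faces_of_dim_def d_def by auto
    show "card (edges_meeting X A) \<ge> q * card A"
    proof (cases "A = {}")
      case True then show ?thesis by simp
    next
      case False
      then have "d \<ge> 0" using AV V_nonempty_cdim[OF sc] unfolding d_def by blast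
      then obtain G where G: "G \<in> X1" "G \<in> X2" "int (card G) = d + 1" using Gex by blast
      show ?thesis
      proof (cases "F \<in> X1")
        case True
        show ?thesis by (rule key[OF sc1 sc2 XU sc d1 d2 G r1 r2 AV True F(2) F(3)])
      next
        case False
        moreover have "F \<in> X1 \<union> X2" using F(1) XU by simp
        ultimately have "F \<in> X2" by blast
        have XU': "X = X2 \<union> X1" using XU by blast
        show ?thesis by (rule key[OF sc2 sc1 XU' sc d2 d1 G(2) G(1) G(3) r2 r1 AV \<open>F \<in> X2\<close> F(2) F(3)])
      qed
    qed
  qed
  have min: "minimally_q_rigid q X \<Longrightarrow> minimally_q_rigid q X1 \<and> minimally_q_rigid q X2"
  proof -
    assume m: "minimally_q_rigid q X"
    show ?thesis
    proof (cases "d \<ge> 0")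
      case True
      then obtain G where G: "G \<in> X1" "G \<in> X2" "int (card G) = d + 1" using Gex by blast
      have XU': "X = X2 \<union> X1" using XU by blast
      have dd: "cdim X = d" unfolding d_def ..
      show ?thesis
        using part2[OF sc1 sc2 XU sc d1 d2 dd G r1 r2 m]
          part2[OF sc2 sc1 XU' sc d2 d1 dd G(2) G(1) G(3) r2 r1 m] by blast
    next
      case False
      then have d: "d = -1" using cdim_ge_m1[OF finX] unfolding d_def by linarith
      have V: "vertices X = {}" using V_nonempty_cdim[OF sc] False unfolding d_def by blast
      have V1: "vertices X1 = {}" and V2: "vertices X2 = {}" using V VU by blast+
      have E1: "edges X1 = {}" using V1 edge_sub_V[of _ X1] unfolding edges_def by fastforce
      have E2: "edges X2 = {}" using V2 edge_sub_V[of _ X2] unfolding edges_def by fastforce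
      show ?thesis using r1 r2 d1 d2 d V1 V2 E1 E2 unfolding minimally_q_rigid_def by simp
    qed
  qed
  show ?thesis using rig min by blast
qed

end
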